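(* If two trees $T$ and $T'$ have the same subdivision of $[0,1]$ into leaf intervals, then $T'$ can be obtained from $T$ by a finite sequence of basic moves.
   Context: Let $\tau=(\sqrt5-1)/2$, so $\tau^2+\tau=1$. A tree is a finite rooted binary tree whose carets (non-leaf vertex with its two children) are each labelled $x$-type or $y$-type. Vertices correspond to subintervals of $[0,1]$: the root to $[0,1]$; if a vertex corresponds to $[p,p+\tau^k]$, an $x$-type caret there gives children $[p,p+\tau^{k+2}]$ (left) and $[p+\tau^{k+2},p+\tau^k]$ (right), and a $y$-type caret gives $[p,p+\tau^{k+1}]$ (left) and $[p+\tau^{k+1},p+\tau^k]$ (right). The subdivision of a tree is the decomposition of $[0,1]$ into the intervals of its leaves. A basic move replaces, at some vertex of a tree, an $x$-type caret whose right child carries an $x$-type caret by a $y$-type caret whose left child carries a $y$-type caret (keeping the three subtrees hanging below, in the same left-to-right order), or performs the reverse replacement. *)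

theory Defs
  imports Complex_Main
begin

definition tau :: real where "tau = (sqrt 5 - 1) / 2"

datatype ftree = Leaf | XC ftree ftree | YC ftree ftree

text \<open>Leaf intervals of a tree whose root corresponds to [p, p + tau^k],
  given as pairs (left endpoint, right endpoint).\<close>
fun leaf_intervals :: "ftree \<Rightarrow> real \<Rightarrow> nat \<Rightarrow> (real \<times> real) set" where
  "leaf_intervals Leaf p k = {(p, p + tau ^ k)}"
| "leaf_intervals (XC l r) p k =
     leaf_intervals l p (k + 2) \<union> leaf_intervals r (p + tau ^ (k + 2)) (k + 1)"
| "leaf_intervals (YC l r) p k =
     leaf_intervals l p (k + 1) \<union> leaf_intervals r (p + tau ^ (k + 1)) (k + 2)"

definition subdivision :: "ftree \<Rightarrow> (real \<times> real) set" where
  "subdivision T = leaf_intervals T 0 0"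

inductive basic_move :: "ftree \<Rightarrow> ftree \<Rightarrow> bool" where
  xy: "basic_move (XC A (XC B C)) (YC (YC A B) C)"
| yx: "basic_move (YC (YC A B) C) (XC A (XC B C))"
| XL: "basic_move l l' \<Longrightarrow> basic_move (XC l r) (XC l' r)"
| XR: "basic_move r r' \<Longrightarrow> basic_move (XC l r) (XC l r')"
| YL: "basic_move l l' \<Longrightarrow> basic_move (YC l r) (YC l' r)"
| YR: "basic_move r r' \<Longrightarrow> basic_move (YC l r) (YC l r')"

end

theory Submission
  imports Defs
begin

lemma tau_pos: "tau > 0"
  unfolding tau_def by (simp add: real_less_rsqrt)

lemma tau_lt1: "tau < 1"
proof -
  have "sqrt 9 = 3" by (rule real_sqrt_unique) auto
  moreover have "sqrt 5 < sqrt 9" by (rule real_sqrt_less_mono) simp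
  ultimately have "sqrt 5 < 3" by linarith
  then show ?thesis unfolding tau_def by simp
qed

lemma tau_eq: "tau^2 + tau = 1"
  unfolding tau_def by (simp add: power2_eq_square field_simps)

lemma tau_pow_eq: "tau^(k+2) + tau^(k+1) = tau^k"
proof -
  have "tau^(k+2) + tau^(k+1) = tau^k * (tau^2 + tau)" by (simp add: algebra_simps power_add power2_eq_square)
  then show ?thesis using tau_eq by simp
qed

lemma tau_pow_pos: "tau^k > 0" using tau_pos by simp

lemma tau_pow_dec: "tau^(Suc k) < tau^k"
  using tau_pos tau_lt1 by simp

lemma LI_bounds: "(a,b) \<in> leaf_intervals t p k \<Longrightarrow> p \<le> a \<and> a < b \<and> b \<le> p + tau^k"
proof (induction t arbitrary: p k)
  case Leaf then show ?case using tau_pow_pos[of k] by auto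
next
  case (XC l r)
  have e: "tau^(k+2) + tau^(k+1) = tau^k" by (rule tau_pow_eq)
  have "tau^(k+2) > 0" "tau^(k+1) > 0" using tau_pow_pos[of "k+2"] tau_pow_pos[of "k+1"] by auto
  with XC e show ?case by (auto; fastforce)
next
  case (YC l r)
  have e: "tau^(k+2) + tau^(k+1) = tau^k" by (rule tau_pow_eq)
  have "tau^(k+2) > 0" "tau^(k+1) > 0" using tau_pow_pos[of "k+2"] tau_pow_pos[of "k+1"] by auto
  with YC e show ?case by (auto; fastforce)
qed

lemma LI_start: "\<exists>b. (p,b) \<in> leaf_intervals t p k"
  by (induction t arbitrary: p k) (simp_all, blast+)

lemma move_LI: "basic_move t t' \<Longrightarrow> leaf_intervals t p k = leaf_intervals t' p k"
proof (induction arbitrary: p k rule: basic_move.induct)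
  case (xy A B C)
  have "tau^(k+1+2) + tau^(k+1+1) = tau^(k+1)" by (rule tau_pow_eq)
  then have e: "p + tau * (tau * tau ^ k) + tau * (tau * (tau * tau ^ k)) = p + tau * tau ^ k" by simp
  show ?case by (simp add: Un_ac e)
next
  case (yx A B C)
  have "tau^(k+1+2) + tau^(k+1+1) = tau^(k+1)" by (rule tau_pow_eq)
  then have e: "p + tau * (tau * tau ^ k) + tau * (tau * (tau * tau ^ k)) = p + tau * tau ^ k" by simp
  show ?case by (simp add: Un_ac e)
qed auto

lemma moves_LI: "basic_move\<^sup>*\<^sup>* t t' \<Longrightarrow> leaf_intervals t p k = leaf_intervals t' p k"
  by (induction rule: rtranclp_induct) (auto dest: move_LI[where p=p and k=k])

lemma move_size: "basic_move t t' \<Longrightarrow> size t = size t'"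
  by (induction rule: basic_move.induct) auto

lemma moves_size: "basic_move\<^sup>*\<^sup>* t t' \<Longrightarrow> size t = size t'"
  by (induction rule: rtranclp_induct) (auto dest: move_size)

lemma moves_XL: "basic_move\<^sup>*\<^sup>* l l' \<Longrightarrow> basic_move\<^sup>*\<^sup>* (XC l r) (XC l' r)"
  by (induction rule: rtranclp_induct) (auto intro: rtranclp.rtrancl_into_rtrancl basic_move.XL)
lemma moves_XR: "basic_move\<^sup>*\<^sup>* r r' \<Longrightarrow> basic_move\<^sup>*\<^sup>* (XC l r) (XC l r')"
  by (induction rule: rtranclp_induct) (auto intro: rtranclp.rtrancl_into_rtrancl basic_move.XR)
lemma moves_YL: "basic_move\<^sup>*\<^sup>* l l' \<Longrightarrow> basic_move\<^sup>*\<^sup>* (YC l r) (YC l' r)"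
  by (induction rule: rtranclp_induct) (auto intro: rtranclp.rtrancl_into_rtrancl basic_move.YL)
lemma moves_YR: "basic_move\<^sup>*\<^sup>* r r' \<Longrightarrow> basic_move\<^sup>*\<^sup>* (YC l r) (YC l r')"
  by (induction rule: rtranclp_induct) (auto intro: rtranclp.rtrancl_into_rtrancl basic_move.YR)

lemma to_root:
  "\<forall>p j y. ((p + tau^(j+2), y) \<in> leaf_intervals t p j \<longrightarrow>
        (\<exists>a c. basic_move\<^sup>*\<^sup>* t (XC a c))) \<and>
      ((p + tau^(j+1), y) \<in> leaf_intervals t p j \<longrightarrow>
        (\<exists>a c. basic_move\<^sup>*\<^sup>* t (YC a c)))"
proof (induction t)
  case Leaf
  have "tau^(j+2) > 0" "tau^(j+1) > 0" for j using tau_pos by auto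
  then show ?case by auto
next
  case (XC l r)
  show ?case
  proof (intro allI conjI impI)
    fix p j y show "\<exists>a c. basic_move\<^sup>*\<^sup>* (XC l r) (XC a c)" by blast
  next
    fix p j y
    assume h: "(p + tau^(j+1), y) \<in> leaf_intervals (XC l r) p j"
    have d: "tau^(j+2) < tau^(j+1)" using tau_pow_dec[of "j+1"] by simp
    have "(p + tau^(j+1), y) \<notin> leaf_intervals l p (j+2)"
      using LI_bounds[of "p + tau^(j+1)" y l p "j+2"] d by auto
    with h have hr: "(p + tau^(j+1), y) \<in> leaf_intervals r (p + tau^(j+2)) (j+1)" by simp
    have e1: "tau^(j+1+2) + tau^(j+1+1) = tau^(j+1)" by (rule tau_pow_eq)
    have e2: "tau^(j+1+1) = tau^(j+2)" by simp
    have "p + tau^(j+1) = (p + tau^(j+2)) + tau^((j+1)+2)" using e1 e2 by linarith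
    with hr XC.IH(2) obtain B C where m: "basic_move\<^sup>*\<^sup>* r (XC B C)" by metis
    have "basic_move\<^sup>*\<^sup>* (XC l r) (XC l (XC B C))" using moves_XR[OF m] .
    moreover have "basic_move (XC l (XC B C)) (YC (YC l B) C)" by (rule basic_move.xy)
    ultimately show "\<exists>a c. basic_move\<^sup>*\<^sup>* (XC l r) (YC a c)" by (meson rtranclp.rtrancl_into_rtrancl)
  qed
next
  case (YC l r)
  show ?case
  proof (intro allI conjI impI)
    fix p j y show "\<exists>a c. basic_move\<^sup>*\<^sup>* (YC l r) (YC a c)" by blast
  next
    fix p j y
    assume h: "(p + tau^(j+2), y) \<in> leaf_intervals (YC l r) p j"
    have d: "tau^(j+2) < tau^(j+1)" using tau_pow_dec[of "j+1"] by simp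
    have "(p + tau^(j+2), y) \<notin> leaf_intervals r (p + tau^(j+1)) (j+2)"
      using LI_bounds[of "p + tau^(j+2)" y r "p + tau^(j+1)" "j+2"] d by auto
    with h have hl: "(p + tau^((j+1)+1), y) \<in> leaf_intervals l p (j+1)" by simp
    with YC.IH(1) obtain A B where m: "basic_move\<^sup>*\<^sup>* l (YC A B)" by metis
    have "basic_move\<^sup>*\<^sup>* (YC l r) (YC (YC A B) r)" using moves_YL[OF m] .
    moreover have "basic_move (YC (YC A B) r) (XC A (XC B r))" by (rule basic_move.yx)
    ultimately show "\<exists>a c. basic_move\<^sup>*\<^sup>* (YC l r) (XC a c)" by (meson rtranclp.rtrancl_into_rtrancl)
  qed
qed

lemma split_XC:
  "leaf_intervals l p (k+2) = {x \<in> leaf_intervals (XC l r) p k. fst x < p + tau^(k+2)}"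
  "leaf_intervals r (p + tau^(k+2)) (k+1) = {x \<in> leaf_intervals (XC l r) p k. \<not> fst x < p + tau^(k+2)}"
  using LI_bounds[of _ _ l p "k+2"] LI_bounds[of _ _ r "p + tau^(k+2)" "k+1"]
  by (auto; fastforce)+

lemma split_YC:
  "leaf_intervals l p (k+1) = {x \<in> leaf_intervals (YC l r) p k. fst x < p + tau^(k+1)}"
  "leaf_intervals r (p + tau^(k+1)) (k+2) = {x \<in> leaf_intervals (YC l r) p k. \<not> fst x < p + tau^(k+1)}"
  using LI_bounds[of _ _ l p "k+1"] LI_bounds[of _ _ r "p + tau^(k+1)" "k+2"]
  by (auto; fastforce)+


lemma LI_not_leaf_X: "leaf_intervals (XC l r) p k \<noteq> leaf_intervals Leaf p k"
proof
  assume h: "leaf_intervals (XC l r) p k = leaf_intervals Leaf p k"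
  obtain b where "(p + tau^(k+2), b) \<in> leaf_intervals r (p + tau^(k+2)) (k+1)" using LI_start by blast
  then have "(p + tau^(k+2), b) \<in> leaf_intervals (XC l r) p k" by simp
  then have "(p + tau^(k+2), b) \<in> leaf_intervals Leaf p k" using h by (simp only:)
  then show False using tau_pos by simp
qed

lemma LI_not_leaf_Y: "leaf_intervals (YC l r) p k \<noteq> leaf_intervals Leaf p k"
proof
  assume h: "leaf_intervals (YC l r) p k = leaf_intervals Leaf p k"
  obtain b where "(p + tau^(k+1), b) \<in> leaf_intervals r (p + tau^(k+1)) (k+2)" using LI_start by blast
  then have "(p + tau^(k+1), b) \<in> leaf_intervals (YC l r) p k" by simp
  then have "(p + tau^(k+1), b) \<in> leaf_intervals Leaf p k" using h by (simp only:)
  then show False using tau_pos by simp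
qed

lemma main_aux:
  "size T = n \<Longrightarrow> leaf_intervals T p k = leaf_intervals T' p k \<Longrightarrow> basic_move\<^sup>*\<^sup>* T T'"
proof (induction n arbitrary: T T' p k rule: less_induct)
  case (less n)
  have X: "basic_move\<^sup>*\<^sup>* (XC l r) (XC l' r')"
    if s: "size (XC l r) = n" and e: "leaf_intervals (XC l r) p k = leaf_intervals (XC l' r') p k" for l r l' r'
  proof -
    have e1: "leaf_intervals l p (k+2) = leaf_intervals l' p (k+2)" using e split_XC(1)[of l p k r] split_XC(1)[of l' p k r'] by simp
    have e2: "leaf_intervals r (p + tau^(k+2)) (k+1) = leaf_intervals r' (p + tau^(k+2)) (k+1)" using e split_XC(2)[of r p k l] split_XC(2)[of r' p k l'] by simp
    have m1: "basic_move\<^sup>*\<^sup>* l l'" using less.IH[OF _ refl e1] s by simp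
    have m2: "basic_move\<^sup>*\<^sup>* r r'" using less.IH[OF _ refl e2] s by simp
    show ?thesis using moves_XL[OF m1, of r] moves_XR[OF m2, of l'] by (meson rtranclp_trans)
  qed
  have Y: "basic_move\<^sup>*\<^sup>* (YC l r) (YC l' r')"
    if s: "size (YC l r) = n" and e: "leaf_intervals (YC l r) p k = leaf_intervals (YC l' r') p k" for l r l' r'
  proof -
    have e1: "leaf_intervals l p (k+1) = leaf_intervals l' p (k+1)" using e split_YC(1)[of l p k r] split_YC(1)[of l' p k r'] by simp
    have e2: "leaf_intervals r (p + tau^(k+1)) (k+2) = leaf_intervals r' (p + tau^(k+1)) (k+2)" using e split_YC(2)[of r p k l] split_YC(2)[of r' p k l'] by simp
    have m1: "basic_move\<^sup>*\<^sup>* l l'" using less.IH[OF _ refl e1] s by simp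
    have m2: "basic_move\<^sup>*\<^sup>* r r'" using less.IH[OF _ refl e2] s by simp
    show ?thesis using moves_YL[OF m1, of r] moves_YR[OF m2, of l'] by (meson rtranclp_trans)
  qed
  show ?case
  proof (cases T)
    case Leaf
    show ?thesis
    proof (cases T')
      case Leaf then show ?thesis using \<open>T = Leaf\<close> by simp
    next
      case (XC l' r') then show ?thesis using less.prems \<open>T = Leaf\<close> LI_not_leaf_X[of l' r' p k] by simp
    next
      case (YC l' r') then show ?thesis using less.prems \<open>T = Leaf\<close> LI_not_leaf_Y[of l' r' p k] by simp
    qed
  next
    case (XC l r)
    show ?thesis
    proof (cases T')
      case Leaf then show ?thesis using less.prems XC LI_not_leaf_X by auto
    next
      case (XC l' r') then show ?thesis using less.prems \<open>T = XC l r\<close> X[of l r l' r'] by simp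
    next
      case (YC l' r')
      obtain b where "(p + tau^(k+1), b) \<in> leaf_intervals r' (p + tau^(k+1)) (k+2)" using LI_start by blast
      then have "(p + tau^(k+1), b) \<in> leaf_intervals T p k" using less.prems YC by auto
      then obtain a c where m: "basic_move\<^sup>*\<^sup>* T (YC a c)"
        using to_root[of T, THEN spec[of _ p], THEN spec[of _ k], THEN spec[of _ b], THEN conjunct2] by (elim impE exE) blast+
      have "size (YC a c) = n" using moves_size[OF m] less.prems by simp
      moreover have "leaf_intervals (YC a c) p k = leaf_intervals (YC l' r') p k"
        using moves_LI[OF m, of p k] less.prems YC by simp
      ultimately have "basic_move\<^sup>*\<^sup>* (YC a c) (YC l' r')" by (rule Y)
      then show ?thesis using m YC by (meson rtranclp_trans)
    qed
  next
    case (YC l r)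
    show ?thesis
    proof (cases T')
      case Leaf then show ?thesis using less.prems YC LI_not_leaf_Y by auto
    next
      case (YC l' r') then show ?thesis using less.prems \<open>T = YC l r\<close> Y[of l r l' r'] by simp
    next
      case (XC l' r')
      obtain b where "(p + tau^(k+2), b) \<in> leaf_intervals r' (p + tau^(k+2)) (k+1)" using LI_start by blast
      then have "(p + tau^(k+2), b) \<in> leaf_intervals T p k" using less.prems XC by auto
      then obtain a c where m: "basic_move\<^sup>*\<^sup>* T (XC a c)"
        using to_root[of T, THEN spec[of _ p], THEN spec[of _ k], THEN spec[of _ b], THEN conjunct1] by (elim impE exE) blast+
      have "size (XC a c) = n" using moves_size[OF m] less.prems by simp
      moreover have "leaf_intervals (XC a c) p k = leaf_intervals (XC l' r') p k"
        using moves_LI[OF m, of p k] less.prems XC by simp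
      ultimately have "basic_move\<^sup>*\<^sup>* (XC a c) (XC l' r')" by (rule X)
      then show ?thesis using m XC by (meson rtranclp_trans)
    qed
  qed
qed

theorem mainTheorem15:
  fixes T T' :: ftree
  assumes "subdivision T = subdivision T'"
  shows "basic_move\<^sup>*\<^sup>* T T'"
  using main_aux[OF refl, of T 0 0 T'] assms unfolding subdivision_def by simp

end
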